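(* Let $f(x,y)=\dfrac{(x+1)(y+1)}{x+y+1}$. The multiplicative subgroup of $\mathbb{Q}^{+}$ generated by the set $\{f(x,y) : x,y \text{ positive integers}\}$ is all of $\mathbb{Q}^{+}$.
   Context: $\mathbb{Q}^+$ denotes the multiplicative group of positive rational numbers. *)

theory Defs
  imports Complex_Main
begin

definition f :: "nat \<Rightarrow> nat \<Rightarrow> rat" where
  "f x y = (of_nat (x + 1) * of_nat (y + 1)) / of_nat (x + y + 1)"

text \<open>The subgroup of the multiplicative group of nonzero rationals generated by S
  (for S a set of positive rationals this is the subgroup of Q+ generated by S):
  the smallest set containing 1 and S, closed under products and inverses.\<close>
inductive_set mult_subgroup_gen :: "rat set \<Rightarrow> rat set" for S :: "rat set" where
  one: "1 \<in> mult_subgroup_gen S"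
| gen: "s \<in> S \<Longrightarrow> s \<in> mult_subgroup_gen S"
| mult: "a \<in> mult_subgroup_gen S \<Longrightarrow> b \<in> mult_subgroup_gen S \<Longrightarrow> a * b \<in> mult_subgroup_gen S"
| inv: "a \<in> mult_subgroup_gen S \<Longrightarrow> inverse a \<in> mult_subgroup_gen S"

end

theory Submission
  imports Defs
begin

lemma f_pos: "x > 0 \<Longrightarrow> y > 0 \<Longrightarrow> f x y > 0"
  unfolding f_def by (simp add: divide_pos_pos)

lemma nat_in:
  fixes n :: nat
  assumes "n \<ge> 1"
  shows "(of_nat n :: rat) \<in> mult_subgroup_gen {f x y | x y. x > 0 \<and> y > 0}"
proof -
  let ?G = "mult_subgroup_gen {f x y | x y. x > 0 \<and> y > 0}"
  have g: "f x y \<in> ?G" if "x > 0" "y > 0" for x y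
    using that by (intro mult_subgroup_gen.gen) blast
  have "f 1 1 * f 1 2 \<in> ?G" by (intro mult_subgroup_gen.mult g) auto
  moreover have "f 1 1 * f 1 2 = 2" by (simp add: f_def)
  ultimately have two: "(2::rat) \<in> ?G" by simp
  have ge2: "(of_nat n :: rat) \<in> ?G" if "n \<ge> 2" for n :: nat
    using that
  proof (induction n rule: nat_induct_at_least)
    case base then show ?case using two by simp
  next
    case (Suc n)
    have "2 * of_nat n * inverse (f 1 (n - 1)) \<in> ?G"
      using Suc two g[of 1 "n-1"]
      by (intro mult_subgroup_gen.mult mult_subgroup_gen.inv) auto
    moreover have "2 * of_nat n * inverse (f 1 (n - 1)) = (of_nat (Suc n) :: rat)"
      using Suc.hyps by (simp add: f_def field_simps of_nat_diff)
    ultimately show ?case by simp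
  qed
  show ?thesis
  proof (cases "n = 1")
    case True then show ?thesis using mult_subgroup_gen.one by simp
  next
    case False then show ?thesis using assms ge2 by simp
  qed
qed

theorem mainTheorem5:
  shows "mult_subgroup_gen {f x y | x y. x > 0 \<and> y > 0} = {q :: rat. q > 0}"
proof
  show "mult_subgroup_gen {f x y | x y. x > 0 \<and> y > 0} \<subseteq> {q :: rat. q > 0}"
  proof
    fix q assume "q \<in> mult_subgroup_gen {f x y | x y. x > 0 \<and> y > 0}"
    then show "q \<in> {q :: rat. q > 0}"
      by induction (auto simp: f_pos)
  qed
next
  show "{q :: rat. q > 0} \<subseteq> mult_subgroup_gen {f x y | x y. x > 0 \<and> y > 0}"
  proof
    fix q :: rat assume "q \<in> {q. q > 0}"
    hence q: "q > 0" by simp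
    obtain a b where ab: "quotient_of q = (a, b)" by (cases "quotient_of q")
    have qd: "q = of_int a / of_int b" using quotient_of_div[OF ab] .
    have b: "b > 0" using quotient_of_denom_pos[OF ab] .
    have a: "a > 0" using q b qd by (auto simp: zero_less_divide_iff)
    have "of_nat (nat a) * inverse (of_nat (nat b)) \<in> mult_subgroup_gen {f x y | x y. x > 0 \<and> y > 0}"
      using a b by (intro mult_subgroup_gen.mult mult_subgroup_gen.inv nat_in) auto
    moreover have "(of_nat (nat a) * inverse (of_nat (nat b)) :: rat) = q"
      using a b qd by (simp add: divide_inverse)
    ultimately show "q \<in> mult_subgroup_gen {f x y | x y. x > 0 \<and> y > 0}" by simp
  qed
qed

end
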